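(* Let $0<p<1-1/e^2$ be constant and $b=\frac1{1-p}$, so that $\log b<2$. Let $c=\frac12\left(1-\frac{\log b}{2}\right)$ and $\tilde c=\min\left(\frac12\left(\frac1{\log b}-\frac12\right),\frac12\right)$. Let $(n_j)_{j\ge1}$ be a strictly increasing sequence of positive integers and $j_0$ an integer such that $j$ divides $n_j$ for all $j\ge j_0$ and $\gamma(n_j)=j+o(1)$ as $j\to\infty$, where $\gamma(n)=2\log_b n-2\log_b\log_b n-2\log_b 2$. Write $n=n_j$, $k=k_j=n_j/j$, and for $\rho\in[0,1]$ and $2\le i\le j$ let \[T_i=T_i(\rho)=\frac{e^{\rho i}\,b^{\binom i2}\,k^2\,(j!)^2}{n^i\, i!\,((j-i)!)^2}.\] Then, if $j$ is large enough, for all $\rho\in[0,c]$ and all $3\le i\le j$, \[T_i\le n^{-\tilde c}.\]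
   Context: Here $\log$ denotes the natural logarithm. In the paper, $\rho=v/n$ is the proportion of vertices lying in overlap blocks (intersections of size at least $2$ between a part of one $k$-equipartition and a part of another), and the hypothesis $\rho\le c$ is the condition defining the "typical overlap" range. *)

theory Defs
  imports Complex_Main
begin

definition gam :: "real \<Rightarrow> real \<Rightarrow> real" where
  "gam b n = 2 * log b n - 2 * log b (log b n) - 2 * log b 2"

definition T :: "real \<Rightarrow> nat \<Rightarrow> nat \<Rightarrow> real \<Rightarrow> nat \<Rightarrow> real" where
  "T b n j \<rho> i =
     exp (\<rho> * real i) * b ^ (i choose 2) * (real n / real j)^2 * (fact j)^2
     / (real n ^ i * fact i * (fact (j - i))^2)"

end

theory Submission
  imports Defs "HOL-Real_Asymp.Real_Asymp"
begin


lemma ln_fact_upper: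
  assumes "1 \<le> i"
  shows "ln (fact i :: real) \<le> (real i + 1) * ln (real i) - real i + 1"
  using assms
proof (induction i rule: dec_induct)
  case base
  then show ?case by simp
next
  case (step i)
  have ipos: "real i > 0" using step.hyps by simp
  have key: "ln (real i) - ln (real i + 1) \<le> - 1 / (real i + 1)"
  proof -
    have "ln (real i / (real i + 1)) \<le> real i / (real i + 1) - 1"
      by (rule ln_le_minus_one) (use ipos in simp)
    moreover have "real i / (real i + 1) - 1 = - 1 / (real i + 1)"
      using ipos by (simp add: field_simps)
    moreover have "ln (real i / (real i + 1)) = ln (real i) - ln (real i + 1)"
      using ipos by (simp add: ln_div)
    ultimately show ?thesis by simp
  qed
  have k2: "(real i + 1) * (ln (real i) - ln (real i + 1)) \<le> -1"
  proof -
    have "(real i + 1) * (ln (real i) - ln (real i + 1)) \<le> (real i + 1) * (- 1 / (real i + 1))"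
      by (rule mult_left_mono[OF key]) simp
    also have "\<dots> = -1" using ipos by simp
    finally show ?thesis .
  qed
  have "ln (fact (Suc i) :: real) = ln (real i + 1) + ln (fact i)"
    by (simp add: ln_mult add.commute)
  also have "\<dots> \<le> ln (real i + 1) + ((real i + 1) * ln (real i) - real i + 1)"
    using step.IH by simp
  also have "\<dots> \<le> (real (Suc i) + 1) * ln (real (Suc i)) - real (Suc i) + 1"
    using k2 by (simp add: algebra_simps)
  finally show ?case .
qed

lemma ln_fact_ratio:
  assumes "i \<le> j" "1 \<le> j"
  shows "ln (fact j :: real) - ln (fact (j - i)) \<le> real i * ln (real j)"
proof -
  have "fact j = fact (j - i) * (fact j div fact (j - i) :: nat)"
    by (simp add: fact_dvd assms)
  hence "(fact j :: nat) \<le> fact (j - i) * j ^ i"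
    using fact_div_fact_le_pow[OF assms(1)] by (metis mult_le_mono2)
  hence "(fact j :: real) \<le> fact (j - i) * real j ^ i"
    by (metis of_nat_fact of_nat_le_iff of_nat_mult of_nat_power)
  hence "ln (fact j :: real) \<le> ln (fact (j - i) * real j ^ i)"
    by (rule ln_mono) simp
  also have "\<dots> = ln (fact (j - i)) + real i * ln (real j)"
    using assms by (simp add: ln_mult ln_realpow)
  finally show ?thesis by simp
qed

lemma ln_fact_binom:
  assumes "i \<le> j" "1 \<le> j"
  shows "2 * ln (fact j :: real) - ln (fact i) - 2 * ln (fact (j - i)) \<le> 2 * real (j - i) * ln (real j) + ln (fact i)"
proof -
  have e: "(fact j :: real) = fact i * fact (j - i) * real (j choose i)"
    using binomial_fact_lemma[OF assms(1)] by (metis of_nat_fact of_nat_mult)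
  have "j choose i = j choose (j - i)" using binomial_symmetric[OF assms(1)] .
  hence "j choose i \<le> j ^ (j - i)" using binomial_le_pow[of "j - i" j] by simp
  hence c: "real (j choose i) \<le> real j ^ (j - i)" by (metis of_nat_le_iff of_nat_power)
  have cpos: "real (j choose i) > 0" using assms by simp
  have "ln (real (j choose i)) \<le> ln (real j ^ (j - i))" by (rule ln_mono[OF c cpos])
  also have "\<dots> = real (j - i) * ln (real j)" using assms by (simp add: ln_realpow)
  finally have lc: "ln (real (j choose i)) \<le> real (j - i) * ln (real j)" .
  have "ln (fact j :: real) = ln (fact i) + ln (fact (j - i)) + ln (real (j choose i))"
    using e cpos by (simp add: ln_mult fact_gt_zero)
  thus ?thesis using lc by simp
qed



lemma lin1:
  fixes LHS u1 A P lj Fj Fm Fi B Q LJ L Ld Ldr rlj R KK ctN N lnJ :: real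
  assumes "LHS = u1 + A - P - 2*lj + 2*Fj - 2*Fm - Fi" "B \<le> P" "3*LJ - 6*L \<le> Q"
    "A - B = -Q/2 + LJ + Ldr/2 - Ld" "u1 + Ldr/2 + 2*rlj \<le> R" "R \<le> KK" "ctN \<le> N/2"
    "N \<le> LJ/2 + Ld/2 + lnJ" "KK + 7 + lnJ/2 \<le> LJ/4" "Fj - Fm \<le> rlj" "0 \<le> Fi" "0 \<le> lj"
    "0 \<le> Ld" "Ld \<le> 1" "L < 2"
  shows "LHS \<le> - ctN"
  using assms by linarith

lemma regime1:
  fixes L \<rho> \<delta> \<epsilon> N lx ct r J K lj Fj Fi Fm :: real
  assumes L: "0 < L" "L < 2" and rho: "0 \<le> \<rho>" "\<rho> \<le> 1/2"
    and d: "0 \<le> \<delta>" "\<delta> \<le> 1" "L * \<delta> \<le> 1" and e: "\<bar>\<epsilon>\<bar> \<le> \<delta>"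
    and N: "N = L * J / 2 + L * \<epsilon> / 2 + lx" and lx: "0 \<le> lx" "lx \<le> ln (3 * J)"
    and ct: "0 \<le> ct" "ct \<le> 1/2"
    and r: "3 \<le> r" "r \<le> K * lj" and KJ: "K * lj \<le> J - 2" and lj: "0 \<le> lj"
    and big: "K * lj * (1 + 2 * lj) + 7 + ln (3 * J) / 2 \<le> L * J / 4"
    and F1: "Fj - Fm \<le> r * lj" and F2: "0 \<le> Fi"
  shows "\<rho> * r + L * (r * (r - 1) / 2) + 2 * (N - lj) + 2 * Fj - r * N - Fi - 2 * Fm \<le> - ct * N"
proof -
  have Le: "L * \<epsilon> \<ge> - (L * \<delta>)" "L * \<epsilon> \<le> L * \<delta>"
  proof -
    have "-\<epsilon> \<le> \<delta>" "\<epsilon> \<le> \<delta>" using e by auto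
    hence "L * (-\<epsilon>) \<le> L * \<delta>" "L * \<epsilon> \<le> L * \<delta>"
      using mult_left_mono L by (metis less_eq_real_def)+
    thus "L * \<epsilon> \<ge> - (L * \<delta>)" "L * \<epsilon> \<le> L * \<delta>" by auto
  qed
  have N1: "N \<ge> L * (J - \<delta>) / 2"
  proof -
    have "L * (J - \<delta>) / 2 = L * J / 2 - L * \<delta> / 2" by (simp add: field_simps)
    thus ?thesis using N Le lx by linarith
  qed
  have N2: "N \<le> L * J / 2 + L * \<delta> / 2 + ln (3 * J)" using N Le lx by linarith
  have Npos: "N \<ge> 0"
  proof -
    have "J - \<delta> \<ge> 0" using KJ r d by linarith
    hence "L * (J - \<delta>) \<ge> 0" using L by simp
    thus ?thesis using N1 by linarith
  qed
  have s3: "(r - 2) * N \<ge> (r - 2) * (L * (J - \<delta>) / 2)"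
    using mult_left_mono[OF N1, of "r - 2"] r by simp
  have s4: "r * (J + 1 - r) \<ge> 3 * (J - 2)"
  proof -
    have "(r - 3) * (J - 2 - r) \<ge> 0" using r KJ by simp
    thus ?thesis by (simp add: algebra_simps)
  qed
  have s4': "L * (r * (J + 1 - r)) \<ge> L * (3 * (J - 2))"
    using mult_left_mono[OF s4, of L] L by simp
  have s5: "L * (r * (r - 1) / 2) - (r - 2) * (L * (J - \<delta>) / 2)
      = - (L * (r * (J + 1 - r))) / 2 + L * J + (L * \<delta>) * r / 2 - L * \<delta>"
    by (simp add: field_simps)
  have s6: "\<rho> * r + (L * \<delta>) * r / 2 + 2 * r * lj \<le> r * (1 + 2 * lj)"
  proof -
    have "\<rho> * r \<le> r / 2" using mult_right_mono[OF rho(2), of r] r by simp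
    moreover have "(L * \<delta>) * r \<le> r" using mult_right_mono[OF d(3), of r] r by simp
    ultimately show ?thesis by (simp add: algebra_simps)
  qed
  have s7: "r * (1 + 2 * lj) \<le> K * lj * (1 + 2 * lj)"
    using mult_right_mono[OF r(2), of "1 + 2 * lj"] lj by simp
  have s8: "ct * N \<le> N / 2" using mult_right_mono[OF ct(2) Npos] by simp
  have LdN: "L * \<delta> \<ge> 0" using L d by simp
  have e3: "L * (3 * (J - 2)) = 3 * (L * J) - 6 * L" by (simp add: algebra_simps)
  have e4: "2 * r * lj = 2 * (r * lj)" by simp
  have expand: "\<rho> * r + L * (r * (r - 1) / 2) + 2 * (N - lj) + 2 * Fj - r * N - Fi - 2 * Fm
     = \<rho> * r + L * (r * (r - 1) / 2) - (r - 2) * N - 2 * lj + 2 * Fj - 2 * Fm - Fi"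
    by (simp add: algebra_simps)
  have s6': "\<rho> * r + L * \<delta> * r / 2 + 2 * (r * lj) \<le> r * (1 + 2 * lj)" using s6 by simp
  have "\<rho> * r + L * (r * (r - 1) / 2) + 2 * (N - lj) + 2 * Fj - r * N - Fi - 2 * Fm \<le> - (ct * N)"
    by (rule lin1[OF expand s3 s4'[unfolded e3] s5 s6' s7 s8 N2 big F1 F2 lj LdN d(3) L(2)])
  thus ?thesis by simp
qed



lemma lin2:
  fixes LHS u1 A P lj Fj Fm Fi PB Q0 lJ1 rlJ1 rlr lr r Lrm Lr Lm Ldr Ld mlj am ar ctN l3J :: real
  assumes "LHS = u1 + A - P - 2*lj + 2*Fj - 2*Fm - Fi" "PB \<le> P"
    "PB = Q0 + rlJ1 - 2*lJ1"
    "2*Fj - Fi - 2*Fm \<le> 2*mlj + Fi"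
    "Fi \<le> rlr + lr - r + 1" "rlr - rlJ1 \<le> 2" "lr \<le> lj" "lJ1 \<le> lj"
    "A - Q0 = -Lrm/2 + Lr/2 + Lm + Ldr/2 - Ld" "0 \<le> Ld"
    "Lrm/2 - Lm - 2*mlj \<ge> am/2"
    "u1 \<le> ar" "Ldr \<le> ar/2" "Lr/2 - r = -2*ar"
    "ctN \<le> ar/2 + am/2 + 1/4 + l3J/2"
    "ar/4 \<ge> lj + 13/4 + l3J/2"
  shows "LHS \<le> - ctN"
  using assms by linarith

lemma regime2:
  fixes L a \<rho> \<delta> \<epsilon> N lx ct r J lj Fj Fi Fm :: real
  assumes L: "0 < L" "L < 2" and a: "a = (1 - L/2)/2" and rho: "0 \<le> \<rho>" "\<rho> \<le> a"
    and d: "0 \<le> \<delta>" "\<delta> \<le> 1" "L * \<delta> \<le> a/2" and e: "\<bar>\<epsilon>\<bar> \<le> \<delta>"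
    and N: "N = L * J / 2 + L * \<epsilon> / 2 + lx" and lx: "ln (J - 1) \<le> lx" "lx \<le> ln (3 * J)"
    and J: "2 \<le> J" and ct: "0 \<le> ct" "ct \<le> a / L" "ct \<le> 1/2"
    and r: "2 \<le> r" "r \<le> J" and lj: "lj = ln J"
    and hR1: "L * r / 2 \<ge> L + 2 * lj + a / 2"
    and hR2: "r * a / 4 \<ge> lj + 13/4 + ln (3 * J) / 2"
    and F: "2 * Fj - Fi - 2 * Fm \<le> 2 * (J - r) * lj + Fi"
    and Fi: "Fi \<le> (r + 1) * ln r - r + 1"
  shows "\<rho> * r + L * (r * (r - 1) / 2) + 2 * (N - lj) + 2 * Fj - r * N - Fi - 2 * Fm \<le> - ct * N"
proof -
  have Le: "L * \<epsilon> \<ge> - (L * \<delta>)" "L * \<epsilon> \<le> L * \<delta>"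
  proof -
    have "-\<epsilon> \<le> \<delta>" "\<epsilon> \<le> \<delta>" using e by auto
    hence "L * (-\<epsilon>) \<le> L * \<delta>" "L * \<epsilon> \<le> L * \<delta>"
      using mult_left_mono L by (metis less_eq_real_def)+
    thus "L * \<epsilon> \<ge> - (L * \<delta>)" "L * \<epsilon> \<le> L * \<delta>" by auto
  qed
  have lJ1: "ln (J - 1) \<ge> 0" using J by simp
  have Nlow: "N \<ge> L * J / 2 - L * \<delta> / 2 + ln (J - 1)" using N Le lx by linarith
  have Pge: "(r - 2) * (L * J / 2 - L * \<delta> / 2 + ln (J - 1)) \<le> (r - 2) * N"
    using mult_left_mono[OF Nlow, of "r - 2"] r by simp
  have PBeq: "(r - 2) * (L * J / 2 - L * \<delta> / 2 + ln (J - 1))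
     = (r - 2) * (L * J / 2 - L * \<delta> / 2) + r * ln (J - 1) - 2 * ln (J - 1)"
    by (simp add: algebra_simps)
  have F': "2 * Fj - Fi - 2 * Fm \<le> 2 * ((J - r) * lj) + Fi" using F by (simp only: mult.assoc)
  have Fi': "Fi \<le> r * ln r + ln r - r + 1" using Fi by (simp add: algebra_simps)
  have lr: "ln r \<le> lj" using lj r by simp
  have lJ1lj: "ln (J - 1) \<le> lj" using lj J by simp
  have rr: "r * ln r - r * ln (J - 1) \<le> 2"
  proof -
    have J1: "J - 1 > 0" using J by simp
    have "ln (J / (J - 1)) \<le> J / (J - 1) - 1" by (rule ln_le_minus_one) (use J1 J in simp)
    moreover have "J / (J - 1) - 1 = 1 / (J - 1)" using J1 by (simp add: field_simps)
    moreover have "ln (J / (J - 1)) = ln J - ln (J - 1)" using J1 J by (simp add: ln_div)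
    ultimately have q: "ln J - ln (J - 1) \<le> 1 / (J - 1)" by simp
    have "ln r - ln (J - 1) \<le> 1 / (J - 1)" using q lr lj by simp
    hence "r * (ln r - ln (J - 1)) \<le> r * (1 / (J - 1))" using r by (intro mult_left_mono) auto
    also have "\<dots> \<le> 2" using r J1 J by (simp add: field_simps)
    finally show ?thesis by (simp add: algebra_simps)
  qed
  have Aeq: "L * (r * (r - 1) / 2) - (r - 2) * (L * J / 2 - L * \<delta> / 2)
     = - (L * (r * (J - r))) / 2 + L * r / 2 + L * (J - r) + L * \<delta> * r / 2 - L * \<delta>"
    by (simp add: field_simps)
  have LdN: "0 \<le> L * \<delta>" using L d by simp
  have mb: "L * (r * (J - r)) / 2 - L * (J - r) - 2 * ((J - r) * lj) \<ge> a * (J - r) / 2"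
  proof -
    have "(J - r) * (L * r / 2 - L - 2 * lj) \<ge> (J - r) * (a / 2)"
      using mult_left_mono[OF _, of "a/2" "L * r / 2 - L - 2 * lj" "J - r"] hR1 r by simp
    thus ?thesis by (simp add: algebra_simps)
  qed
  have u1: "\<rho> * r \<le> a * r" using mult_right_mono[OF rho(2), of r] r by simp
  have Ldr: "L * \<delta> * r \<le> a * r / 2" using mult_right_mono[OF d(3), of r] r by simp
  have Lr: "L * r / 2 - r = - 2 * (a * r)" unfolding a by (simp add: field_simps)
  have ctN: "ct * N \<le> a * r / 2 + a * (J - r) / 2 + 1/4 + ln (3 * J) / 2"
  proof -
    have pos: "L * J / 2 + L * \<epsilon> / 2 \<ge> 0"
    proof -
      have "L * J \<ge> 2 * L" using J L by simp
      moreover have "L * \<delta> \<le> L" using L d by (simp add: mult_left_le)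
      ultimately show ?thesis using Le by linarith
    qed
    have lx0: "lx \<ge> 0" using lx lJ1 by linarith
    have "ct * (L * J / 2 + L * \<epsilon> / 2) \<le> a / L * (L * J / 2 + L * \<epsilon> / 2)"
      using mult_right_mono[OF ct(2) pos] .
    also have "\<dots> = a * J / 2 + a * \<epsilon> / 2" using L by (simp add: field_simps)
    finally have c1: "ct * (L * J / 2 + L * \<epsilon> / 2) \<le> a * J / 2 + a * \<epsilon> / 2" .
    have a0: "a \<ge> 0" "a \<le> 1/2" using a L by auto
    have "a * \<epsilon> \<le> a * \<delta>" using mult_left_mono[of \<epsilon> \<delta> a] e a0 by simp
    also have "\<dots> \<le> 1/2" using mult_mono[OF a0(2) d(2)] a0 d by simp
    finally have c2: "a * \<epsilon> \<le> 1/2" .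
    have c3: "ct * lx \<le> lx / 2" using mult_right_mono[OF ct(3) lx0] by simp
    have "ct * N = ct * (L * J / 2 + L * \<epsilon> / 2) + ct * lx" using N by (simp add: algebra_simps)
    moreover have "a * J = a * r + a * (J - r)" by (simp add: algebra_simps)
    ultimately show ?thesis using c1 c2 c3 lx by linarith
  qed
  have hR2': "a * r / 4 \<ge> lj + 13/4 + ln (3 * J) / 2" using hR2 by (simp add: mult.commute)
  have expand: "\<rho> * r + L * (r * (r - 1) / 2) + 2 * (N - lj) + 2 * Fj - r * N - Fi - 2 * Fm
     = \<rho> * r + L * (r * (r - 1) / 2) - (r - 2) * N - 2 * lj + 2 * Fj - 2 * Fm - Fi"
    by (simp add: algebra_simps)
  have "\<rho> * r + L * (r * (r - 1) / 2) + 2 * (N - lj) + 2 * Fj - r * N - Fi - 2 * Fm \<le> - (ct * N)"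
    by (rule lin2[OF expand Pge PBeq F' Fi' rr lr lJ1lj Aeq LdN mb u1 Ldr Lr ctN hR2'])
  thus ?thesis by simp
qed



lemma choose2_real: "real (i choose 2) = real i * (real i - 1) / 2"
proof (induction i)
  case 0 then show ?case by simp
next
  case (Suc i)
  have "(Suc i) choose 2 = (i choose 1) + (i choose 2)"
    by (simp add: numeral_2_eq_2)
  then show ?case using Suc by (simp add: field_simps)
qed

lemma lnT:
  assumes b: "b > 1" and n: "n > 0" and j: "j > 0" and ij: "i \<le> j"
  shows "ln (T b n j \<rho> i) = \<rho> * real i + ln b * (real i * (real i - 1) / 2)
     + 2 * (ln (real n) - ln (real j)) + 2 * ln (fact j) - real i * ln (real n)
     - ln (fact i) - 2 * ln (fact (j - i))"
proof -
  have p1: "exp (\<rho> * real i) * b ^ (i choose 2) * (real n / real j)^2 * (fact j)^2 > 0"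
    using b n j by simp
  have p2: "real n ^ i * fact i * (fact (j - i))^2 > 0" using n by simp
  have "ln (T b n j \<rho> i) = ln (exp (\<rho> * real i) * b ^ (i choose 2) * (real n / real j)^2 * (fact j)^2)
      - ln (real n ^ i * fact i * (fact (j - i))^2)"
  proof -
    have ne: "exp (\<rho> * real i) * b ^ (i choose 2) * (real n / real j)^2 * (fact j)^2 \<noteq> 0"
      "real n ^ i * fact i * (fact (j - i))^2 \<noteq> 0" using p1 p2 by (metis less_irrefl)+
    show ?thesis unfolding T_def ln_div by (simp only: ne not_False_eq_True conj_absorb if_True)
  qed
  also have "ln (exp (\<rho> * real i) * b ^ (i choose 2) * (real n / real j)^2 * (fact j)^2)
      = \<rho> * real i + real (i choose 2) * ln b + 2 * (ln (real n) - ln (real j)) + 2 * ln (fact j)"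
    using b n j by (simp add: ln_mult ln_div ln_realpow)
  also have "ln (real n ^ i * fact i * (fact (j - i))^2) = real i * ln (real n) + ln (fact i) + 2 * ln (fact (j - i))"
    using n by (simp add: ln_mult ln_realpow)
  finally show ?thesis by (simp add: choose2_real algebra_simps)
qed


lemma pointwise:
  fixes b L a ct \<delta> K Y0 \<rho> :: real and n j i :: nat
  assumes b: "b > 1" and Ldef: "L = ln b" and L2: "L < 2"
    and adef: "a = (1 - L/2)/2" and ctdef: "ct = min ((1/L - 1/2)/2) (1/2)"
    and ddef: "\<delta> = min 1 (a/(2*L))" and Kdef: "K = 6/L + 8/a"
    and n: "n > 0" and gam: "\<bar>gam b (real n) - real j\<bar> \<le> \<delta>"
    and Nbig: "ln (real n) \<ge> 1"
    and lj10: "ln (real j) \<ge> 10"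
    and big: "K * ln (real j) * (1 + 2 * ln (real j)) + 7 + ln (3 * real j) / 2 \<le> L * real j / 4"
    and Y0: "\<forall>y \<ge> Y0. 2 * ln y / L \<le> y / 2" and Y0j: "Y0 \<le> 3 * real j"
    and rho: "0 \<le> \<rho>" "\<rho> \<le> a" and i: "3 \<le> i" "i \<le> j"
  shows "T b n j \<rho> i \<le> real n powr (- ct)"
proof -
  define J where "J = real j"
  define r where "r = real i"
  define N where "N = ln (real n)"
  define lj where "lj = ln J"
  have L0: "L > 0" using b Ldef by simp
  have a0: "a > 0" "a \<le> 1/2" using adef L0 L2 by auto
  have aL: "(1/L - 1/2)/2 = a / L" unfolding adef using L0 by (simp add: field_simps)
  have ct0: "ct \<ge> 0" "ct \<le> a / L" "ct \<le> 1/2"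
    using ctdef aL a0 L0 by (auto simp: min_def)
  have d0: "0 \<le> \<delta>" "\<delta> \<le> 1" using ddef a0 L0 by auto
  have dL: "L * \<delta> \<le> a / 2"
  proof -
    have dd: "\<delta> \<le> a / (2 * L)" using ddef by simp
    have "L * \<delta> \<le> L * (a / (2 * L))" by (rule mult_left_mono[OF dd]) (use L0 in simp)
    thus ?thesis using L0 by simp
  qed
  have j0: "j > 0" using lj10 by (cases j) auto
  have J2: "J \<ge> 2"
  proof -
    have "exp 10 \<le> J" using lj10 j0 unfolding J_def by (simp add: ln_ge_iff)
    moreover have "(2::real) \<le> exp 10"
      using exp_ge_add_one_self[of 10] by simp
    ultimately show ?thesis by simp
  qed
  have ljdef: "lj = ln J" by (simp add: lj_def)
  have lj10': "lj \<ge> 10" using lj10 by (simp add: lj_def J_def)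
  define x where "x = 2 * N / L"
  have x1: "x \<ge> 1"
  proof -
    have "2 * N \<ge> L" using Nbig L2 N_def by simp
    thus ?thesis unfolding x_def using L0 by (simp add: field_simps)
  qed
  have Npos: "N > 0" using Nbig N_def by simp
  have gx: "gam b (real n) = x - 2 * ln x / L"
  proof -
    have h1: "log b (real n) = N / L" by (simp add: log_def N_def Ldef)
    have h2: "log b (N / L) + log b 2 = ln x / L"
    proof -
      have "log b (N / L) + log b 2 = log b (N / L * 2)"
        using log_mult_pos[of "N/L" 2 b] Npos L0 by simp
      also have "N / L * 2 = x" by (simp add: x_def)
      finally show ?thesis by (simp add: log_def Ldef)
    qed
    have "gam b (real n) = 2 * (N / L) - 2 * (log b (N / L) + log b 2)"
      unfolding gam_def h1 by (simp add: algebra_simps)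
    also have "\<dots> = x - 2 * ln x / L" unfolding h2 x_def by simp
    finally show ?thesis .
  qed
  define \<epsilon> where "\<epsilon> = gam b (real n) - J"
  have e: "\<bar>\<epsilon>\<bar> \<le> \<delta>" using gam by (simp add: \<epsilon>_def J_def)
  have xe: "x = J + \<epsilon> + 2 * ln x / L" using gx by (simp add: \<epsilon>_def)
  have Neq: "N = L * J / 2 + L * \<epsilon> / 2 + ln x"
  proof -
    have "N = L * x / 2" using L0 by (simp add: x_def)
    also have "\<dots> = L * (J + \<epsilon> + 2 * ln x / L) / 2" using xe by simp
    also have "\<dots> = L * J / 2 + L * \<epsilon> / 2 + ln x" using L0 by (simp add: field_simps)
    finally show ?thesis .
  qed
  have lx0: "ln x \<ge> 0" using x1 by simp
  have lnx_pos: "2 * ln x / L \<ge> 0" using lx0 L0 by simp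
  have xlow: "x \<ge> J - 1" using xe lnx_pos e d0 by linarith
  have lxlow: "ln (J - 1) \<le> ln x" using xlow J2 by simp
  have xup: "x \<le> 3 * J"
  proof (cases "x \<ge> Y0")
    case True
    hence "2 * ln x / L \<le> x / 2" using Y0 by simp
    thus ?thesis using xe e d0 J2 by linarith
  next
    case False
    thus ?thesis using Y0j J_def by simp
  qed
  have lxup: "ln x \<le> ln (3 * J)" using xup x1 by simp
  have Fi0: "ln (fact i :: real) \<ge> 0" by simp
  have LT: "ln (T b n j \<rho> i) = \<rho> * r + L * (r * (r - 1) / 2) + 2 * (N - lj) + 2 * ln (fact j)
      - r * N - ln (fact i) - 2 * ln (fact (j - i))"
    using lnT[OF b n j0 i(2), of \<rho>] by (simp add: r_def N_def lj_def J_def Ldef)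
  have K0: "K \<ge> 0" using Kdef L0 a0 by simp
  have main: "ln (T b n j \<rho> i) \<le> - ct * N"
  proof (cases "r \<le> K * lj")
    case True
    have KJ: "K * lj \<le> J - 2"
    proof -
      have kl: "K * lj \<ge> 0" using K0 lj10' by simp
      have "K * lj * 1 \<le> K * lj * (1 + 2 * lj)"
        by (rule mult_left_mono[OF _ kl]) (use lj10' in simp)
      hence "K * lj \<le> K * lj * (1 + 2 * lj)" by simp
      moreover have "ln (3 * J) \<ge> 0" using J2 by simp
      moreover have "L * J / 4 \<le> J / 2" using L2 J2 by simp
      ultimately show ?thesis using big unfolding lj_def J_def by linarith
    qed
    have F1: "ln (fact j) - ln (fact (j - i)) \<le> r * lj"
      using ln_fact_ratio[OF i(2)] j0 by (simp add: r_def lj_def J_def)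
    show ?thesis unfolding LT
      by (rule regime1[OF L0 L2 rho(1) _ d0 _ e Neq lx0 lxup ct0(1) ct0(3) _ True KJ _ _ F1 Fi0])
         (use a0 rho dL lj10' i big in \<open>auto simp: r_def lj_def J_def\<close>)
  next
    case False
    have LK: "L * K = 6 + 8 * L / a" using Kdef L0 a0 by (simp add: field_simps)
    have aK: "a * K = 6 * a / L + 8" using Kdef L0 a0 by (simp add: field_simps)
    have rK: "r \<ge> K * lj" using False by simp
    have hR1: "L * r / 2 \<ge> L + 2 * lj + a / 2"
    proof -
      have "L * r \<ge> L * (K * lj)" using rK L0 by simp
      moreover have "L * (K * lj) = (6 + 8 * L / a) * lj" using LK by (simp add: mult.assoc[symmetric])
      moreover have "(6 + 8 * L / a) * lj \<ge> 6 * lj" using L0 a0 lj10' by (simp add: algebra_simps)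
      ultimately show ?thesis using L2 a0 lj10' by linarith
    qed
    have hR2: "r * a / 4 \<ge> lj + 13/4 + ln (3 * J) / 2"
    proof -
      have c1: "a * r \<ge> a * (K * lj)" using rK a0 by simp
      have c2: "a * (K * lj) = (6 * a / L) * lj + 8 * lj"
        using aK by (simp add: mult.assoc[symmetric] distrib_right)
      have c3: "(6 * a / L) * lj \<ge> 0" using L0 a0 lj10' by simp
      have c4: "ln (3 * J) = ln 3 + lj" using J2 by (simp add: ln_mult lj_def)
      have c5: "ln (3::real) \<le> 2" using ln_le_minus_one[of 3] by simp
      have c6: "r * a = a * r" by simp
      show ?thesis using c1 c2 c3 c4 c5 c6 lj10' by linarith
    qed
    have Jr: "real (j - i) = J - r" using i by (simp add: J_def r_def of_nat_diff)
    have F: "2 * ln (fact j) - ln (fact i) - 2 * ln (fact (j - i)) \<le> 2 * (J - r) * lj + ln (fact i)"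
      using ln_fact_binom[OF i(2)] j0 Jr by (simp add: lj_def J_def)
    have Fi: "ln (fact i) \<le> (r + 1) * ln r - r + 1"
      using ln_fact_upper[of i] i by (simp add: r_def)
    show ?thesis unfolding LT
      by (rule regime2[OF L0 L2 adef rho d0 dL e Neq lxlow lxup J2 ct0 _ _ ljdef hR1 hR2 F Fi])
         (use i j0 in \<open>auto simp: r_def J_def\<close>)
  qed
  have Tpos: "T b n j \<rho> i > 0" unfolding T_def using b n j0 by simp
  have "T b n j \<rho> i = exp (ln (T b n j \<rho> i))" using Tpos by simp
  also have "\<dots> \<le> exp (- ct * N)" using main by simp
  also have "\<dots> = real n powr (- ct)" using n by (simp add: powr_def N_def)
  finally show ?thesis .
qed

lemma ev_real: "eventually P at_top \<Longrightarrow> eventually (\<lambda>j. P (real j)) sequentially"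
  using filterlim_real_sequentially unfolding filterlim_iff by blast

lemma big_ev:
  fixes K L :: real
  assumes L: "L > 0"
  shows "eventually (\<lambda>x. K * ln x * (1 + 2 * ln x) + 7 + ln (3 * x) / 2 \<le> L * x / 4) at_top"
proof -
  have l1: "((\<lambda>x::real. ln x / x) \<longlongrightarrow> 0) at_top" by real_asymp
  have l2: "((\<lambda>x::real. ln x ^ 2 / x) \<longlongrightarrow> 0) at_top" by real_asymp
  have l3: "((\<lambda>x::real. 1 / x) \<longlongrightarrow> 0) at_top" by real_asymp
  have l4: "((\<lambda>x::real. ln (3 * x) / x) \<longlongrightarrow> 0) at_top" by real_asymp
  have "((\<lambda>x. K * (ln x / x) + 2 * K * (ln x ^ 2 / x) + 7 * (1 / x) + (ln (3 * x) / x) / 2) \<longlongrightarrow>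
      K * 0 + 2 * K * 0 + 7 * 0 + 0 / 2) at_top"
    by (intro tendsto_intros l1 l2 l3 l4) simp_all
  hence lim: "((\<lambda>x. K * (ln x / x) + 2 * K * (ln x ^ 2 / x) + 7 * (1 / x) + (ln (3 * x) / x) / 2) \<longlongrightarrow> 0) at_top"
    by simp
  have "eventually (\<lambda>x. K * (ln x / x) + 2 * K * (ln x ^ 2 / x) + 7 * (1 / x) + (ln (3 * x) / x) / 2 < L / 4) at_top"
  proof -
    have "0 < L / 4" using L by simp
    thus ?thesis by (rule order_tendstoD(2)[OF lim])
  qed
  moreover have "eventually (\<lambda>x::real. x > 0) at_top" by (rule eventually_gt_at_top)
  ultimately show ?thesis
  proof eventually_elim
    case (elim x)
    have "(K * (ln x / x) + 2 * K * (ln x ^ 2 / x) + 7 * (1 / x) + (ln (3 * x) / x) / 2) * x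
        = K * ln x * (1 + 2 * ln x) + 7 + ln (3 * x) / 2"
      using elim(2) by (simp add: field_simps power2_eq_square)
    moreover have "(K * (ln x / x) + 2 * K * (ln x ^ 2 / x) + 7 * (1 / x) + (ln (3 * x) / x) / 2) * x
        \<le> L / 4 * x"
      using elim by (intro mult_right_mono) auto
    ultimately show ?case by simp
  qed
qed

lemma Y0_ev:
  fixes L :: real
  assumes L: "L > 0"
  shows "\<exists>Y0. \<forall>y \<ge> Y0. 2 * ln y / L \<le> y / 2"
proof -
  have "eventually (\<lambda>y. ln y / y < L / 4) at_top"
  proof -
    have "0 < L / 4" using L by simp
    thus ?thesis by (rule order_tendstoD(2)[OF ln_x_over_x_tendsto_0])
  qed
  moreover have "eventually (\<lambda>y::real. y > 0) at_top" by (rule eventually_gt_at_top)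
  ultimately have "eventually (\<lambda>y. 2 * ln y / L \<le> y / 2) at_top"
  proof eventually_elim
    case (elim y)
    have "ln y < L / 4 * y" using elim by (simp add: field_simps)
    hence "2 * ln y < L * y / 2" by simp
    thus ?case using L by (simp add: field_simps)
  qed
  thus ?thesis unfolding eventually_at_top_linorder by blast
qed

theorem lemma6:
  fixes p :: real and nn :: "nat \<Rightarrow> nat" and j0 :: nat
  assumes p_pos: "0 < p" and p_lt: "p < 1 - 1 / exp 2"
    and mono: "strict_mono nn"
    and pos: "\<forall>j\<ge>1. 0 < nn j"
    and dvd: "\<forall>j. 1 \<le> j \<and> j0 \<le> j \<longrightarrow> j dvd nn j"
    and gam_lim: "(\<lambda>j. gam (1 / (1 - p)) (real (nn j)) - real j) \<longlonglongrightarrow> 0"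
  shows "let b = 1 / (1 - p);
             c = (1 - ln b / 2) / 2;
             ct = min ((1 / ln b - 1 / 2) / 2) (1 / 2)
         in \<forall>\<^sub>F j in sequentially.
              \<forall>\<rho>\<in>{0..c}. \<forall>i. 3 \<le> i \<and> i \<le> j \<longrightarrow>
                T b (nn j) j \<rho> i \<le> real (nn j) powr (- ct)"
proof -
  define b where "b = 1 / (1 - p)"
  define L where "L = ln b"
  define a where "a = (1 - L / 2) / 2"
  define ct where "ct = min ((1 / L - 1 / 2) / 2) (1 / 2)"
  define \<delta> where "\<delta> = min 1 (a / (2 * L))"
  define K where "K = 6 / L + 8 / a"
  have p1: "p < 1" using p_lt by (smt (verit) exp_gt_zero divide_pos_pos)
  have b1: "b > 1" unfolding b_def using p_pos p1 by (simp add: field_simps)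
  have L0: "L > 0" unfolding L_def using b1 by simp
  have L2: "L < 2"
  proof -
    have "1 / exp 2 < 1 - p" using p_lt by simp
    hence "1 < exp 2 * (1 - p)" by (simp add: field_simps)
    hence "b < exp 2" unfolding b_def using p1 by (simp add: field_simps)
    hence "ln b < ln (exp 2)" using b1 by (subst ln_less_cancel_iff) auto
    thus ?thesis unfolding L_def by simp
  qed
  have a0: "a > 0" unfolding a_def using L2 by simp
  have d0: "\<delta> > 0" unfolding \<delta>_def using a0 L0 by simp
  obtain Y0 where Y0: "\<forall>y \<ge> Y0. 2 * ln y / L \<le> y / 2" using Y0_ev[OF L0] by blast
  have ev1: "eventually (\<lambda>j. \<bar>gam b (real (nn j)) - real j\<bar> \<le> \<delta>) sequentially"
  proof -
    have "eventually (\<lambda>j. dist (gam b (real (nn j)) - real j) 0 < \<delta>) sequentially"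
      using tendstoD[OF gam_lim[folded b_def] d0] .
    thus ?thesis by eventually_elim (simp add: dist_real_def)
  qed
  have ev3: "eventually (\<lambda>j. ln (real j) \<ge> 10) sequentially"
  proof -
    have "eventually (\<lambda>x::real. ln x \<ge> 10) at_top"
      using ln_at_top unfolding filterlim_at_top by blast
    thus ?thesis by (rule ev_real)
  qed
  have ev4: "eventually (\<lambda>j. K * ln (real j) * (1 + 2 * ln (real j)) + 7 + ln (3 * real j) / 2
      \<le> L * real j / 4) sequentially"
    by (rule ev_real[OF big_ev[OF L0]])
  have ev5: "eventually (\<lambda>j. Y0 \<le> 3 * real j) sequentially"
  proof -
    have "eventually (\<lambda>x::real. Y0 / 3 \<le> x) at_top" by (rule eventually_ge_at_top)
    hence "eventually (\<lambda>x::real. Y0 \<le> 3 * x) at_top" by eventually_elim simp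
    thus ?thesis by (rule ev_real)
  qed
  have "eventually (\<lambda>j. \<forall>\<rho>\<in>{0..a}. \<forall>i. 3 \<le> i \<and> i \<le> j \<longrightarrow>
                T b (nn j) j \<rho> i \<le> real (nn j) powr (- ct)) sequentially"
    using ev1 ev3 ev4 ev5
  proof eventually_elim
    case (elim j)
    have j0': "j > 0" using elim(2) by (cases j) auto
    have n0: "nn j > 0" using pos j0' by simp
    have "j \<le> nn j" using seq_suble[OF mono] .
    hence "ln (real j) \<le> ln (real (nn j))" using j0' by simp
    hence Nbig: "ln (real (nn j)) \<ge> 1" using elim(2) by linarith
    show ?case
    proof (intro ballI allI impI)
      fix \<rho> i assume r: "\<rho> \<in> {0..a}" and i: "3 \<le> i \<and> i \<le> j"
      show "T b (nn j) j \<rho> i \<le> real (nn j) powr (- ct)"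
        by (rule pointwise[OF b1 L_def L2 a_def ct_def \<delta>_def K_def n0 elim(1) Nbig elim(2) elim(3) Y0 elim(4)])
           (use r i in auto)
    qed
  qed
  thus ?thesis unfolding Let_def b_def[symmetric] L_def[symmetric] a_def[symmetric] ct_def[symmetric] .
qed

end
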